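(* The series $\widetilde H_{a_1,\dots,a_r}(z)$ and $\Psi(z)\widetilde H_{a_1,\dots,a_r}(z)$, where $r\ge1$ and $(a_1,\dots,a_r)$ ranges over (pairwise distinct) tuples of positive integers none of which is divisible by $3$, together with the series $1$, are linearly independent over $(\mathbb Z/3\mathbb Z)[z]$, and consequently also over $(\mathbb Z/3^\gamma\mathbb Z)[z]$ for every positive integer $\gamma$, and over $\mathbb Z[z]$.
   Context: $\Psi(z)=\prod_{j\ge0}\bigl(1+z^{3^j}\bigr)$. For positive integers $a_1,\dots,a_r$, $$\widetilde H_{a_1,\dots,a_r}(z)=\sum_{k_1>\dots>k_r\ge0}\prod_{j=1}^{r}\left(\frac{z^{3^{k_j}}(1+z^{3^{k_j}})}{1+z^{3^{k_j+1}}}\right)^{a_j},$$ a formal power series in $z$ with integer coefficients (rational functions expanded as power series in $z$); $\widetilde H_{\emptyset}=1$. *)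

theory Defs
  imports "HOL-Computational_Algebra.Computational_Algebra"
begin

text \<open>Quotient of formal power series over the integers: the unique series r with
  r * q = p (used only for denominators q with constant term 1, where it exists,
  i.e. the power series expansion of the rational function p/q).\<close>
definition fps_quot :: "int fps \<Rightarrow> int fps \<Rightarrow> int fps" where
  "fps_quot p q = (THE r. r * q = p)"

text \<open>Psi(z) = prod_{j>=0} (1 + z^(3^j)); the n-th coefficient is the n-th coefficient
  of the finite product over j < n+1 (higher factors do not affect it).\<close>
definition Psi :: "int fps" where
  "Psi = Abs_fps (\<lambda>n. fps_nth (\<Prod>j<Suc n. 1 + fps_X ^ (3 ^ j)) n)"

definition hterm :: "nat \<Rightarrow> int fps" where
  "hterm k = fps_quot (fps_X ^ (3 ^ k) * (1 + fps_X ^ (3 ^ k))) (1 + fps_X ^ (3 ^ Suc k))"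

fun Htr :: "nat \<Rightarrow> nat list \<Rightarrow> int fps" where
  "Htr N [] = 1"
| "Htr N (a # as) = (\<Sum>k<N. hterm k ^ a * Htr k as)"

text \<open>H~_{a_1..a_r}: the formal (coefficientwise convergent) infinite sum over
  k_1 > ... > k_r >= 0.  Since hterm k has order 3^k, only terms with k_1 <= n
  contribute to the n-th coefficient.\<close>
definition Htilde :: "nat list \<Rightarrow> int fps" where
  "Htilde as = Abs_fps (\<lambda>n. fps_nth (Htr (Suc n) as) n)"

text \<open>Index set of the family: (False, []) stands for the series 1; (False, a) for
  H~_a and (True, a) for Psi * H~_a, where a is a nonempty tuple of positive
  integers none divisible by 3.\<close>
definition fam_index :: "(bool \<times> nat list) set" where
  "fam_index = {(False, [])} \<union>
     {(b, as). as \<noteq> [] \<and> (\<forall>x\<in>set as. 0 < x \<and> \<not> 3 dvd x)}"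

definition fam :: "bool \<times> nat list \<Rightarrow> int fps" where
  "fam i = (if fst i then Psi else 1) * Htilde (snd i)"

text \<open>Linear independence over (Z/mZ)[z] (m > 0) of a family of integer series:
  whenever an integer-polynomial combination is congruent to 0 mod m (coefficientwise),
  all coefficient polynomials are congruent to 0 mod m.\<close>
definition lin_indep_mod :: "int \<Rightarrow> ('i \<Rightarrow> int fps) \<Rightarrow> 'i set \<Rightarrow> bool" where
  "lin_indep_mod m F I \<longleftrightarrow>
     (\<forall>S p. finite S \<longrightarrow> S \<subseteq> I \<longrightarrow>
        (\<forall>n. m dvd fps_nth (\<Sum>i\<in>S. fps_of_poly (p i) * F i) n) \<longrightarrow>
        (\<forall>i\<in>S. \<forall>n. m dvd coeff (p i) n))"

definition lin_indep_int :: "('i \<Rightarrow> int fps) \<Rightarrow> 'i set \<Rightarrow> bool" where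
  "lin_indep_int F I \<longleftrightarrow>
     (\<forall>S p. finite S \<longrightarrow> S \<subseteq> I \<longrightarrow>
        (\<Sum>i\<in>S. fps_of_poly (p i) * F i) = 0 \<longrightarrow> (\<forall>i\<in>S. p i = 0))"

end

theory Submission
  imports Defs "HOL-Library.Sublist"
begin

datatype F3 = F0 | F1 | F2

fun toi :: "F3 \<Rightarrow> int" where "toi F0 = 0" | "toi F1 = 1" | "toi F2 = 2"
definition ofi :: "int \<Rightarrow> F3" where
  "ofi k = (if k mod 3 = 0 then F0 else if k mod 3 = 1 then F1 else F2)"

lemma toi_ofi: "toi (ofi k) = k mod 3"
  unfolding ofi_def by auto
lemma ofi_toi: "ofi (toi a) = a"
  by (cases a) (auto simp: ofi_def)
lemma ofi_eq: "ofi k = ofi j \<longleftrightarrow> k mod 3 = j mod 3"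
  apply (rule iffI)
   apply (metis toi_ofi)
  apply (simp add: ofi_def)
  done
lemma ofi_eq': "ofi k = a \<longleftrightarrow> k mod 3 = toi a"
  by (metis ofi_eq ofi_toi toi_ofi)

instantiation F3 :: field
begin
definition "zero_F3 = F0"
definition "one_F3 = F1"
definition "plus_F3 a b = ofi (toi a + toi b)"
definition "minus_F3 a b = ofi (toi a - toi b)"
definition "uminus_F3 a = ofi (- toi a)"
definition "times_F3 a b = ofi (toi a * toi b)"
definition "inverse_F3 (a::F3) = a"
definition "divide_F3 (a::F3) b = ofi (toi a * toi b)"
instance
  apply intro_classes
  apply (unfold plus_F3_def times_F3_def minus_F3_def uminus_F3_def zero_F3_def one_F3_def divide_F3_def)
  apply (simp_all add: ofi_eq toi_ofi ofi_toi mod_add_left_eq mod_add_right_eq mod_mult_left_eq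
      mod_mult_right_eq mod_diff_left_eq mod_diff_right_eq algebra_simps inverse_F3_def)
  subgoal for a by (cases a) (simp_all add: ofi_def)
  subgoal for a by (cases a) (simp_all add: ofi_def)
  done
end


lemma F3_three: "(3::F3) = 0"
proof -
  have "(3::F3) = 1 + 1 + 1" by simp
  also have "\<dots> = 0" by (simp add: plus_F3_def one_F3_def zero_F3_def ofi_def)
  finally show ?thesis .
qed

lemma of_int_F3: "(of_int k :: F3) = ofi k"
proof (induction k rule: int_induct[where k=0])
  case base then show ?case by (simp add: zero_F3_def ofi_def)
next
  case (step1 i) then show ?case
    by (simp add: plus_F3_def one_F3_def ofi_eq toi_ofi mod_add_left_eq)
next
  case (step2 i) then show ?case
    by (simp add: minus_F3_def one_F3_def ofi_eq toi_ofi mod_diff_left_eq)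
qed

lemma of_int_F3_eq0: "(of_int k :: F3) = 0 \<longleftrightarrow> 3 dvd k"
  by (simp add: of_int_F3 zero_F3_def ofi_def dvd_eq_mod_eq_0)



lemma three_fps: "(3::F3 fps) = 0"
  by (simp add: fps_numeral_fps_const F3_three)

lemma cube_add: fixes x y :: "F3 fps" shows "(x + y)^3 = x^3 + y^3"
proof -
  have "(x+y)^3 = x^3 + y^3 + 3*(x^2*y + x*y^2)"
    by (simp add: power3_eq_cube power2_eq_square algebra_simps)
  then show ?thesis by (simp add: three_fps)
qed

lemma cube_minus: fixes x :: "F3 fps" shows "(- x)^3 = - (x^3)"
  by (simp add: power3_eq_cube)

lemma cube_diff: fixes x y :: "F3 fps" shows "(x - y)^3 = x^3 - y^3"
  using cube_add[of x "-y"] by (simp add: cube_minus)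

lemma cube_sum: fixes f :: "'b \<Rightarrow> F3 fps" shows "finite S \<Longrightarrow> (\<Sum>i\<in>S. f i)^3 = (\<Sum>i\<in>S. (f i)^3)"
  by (induction S rule: finite_induct) (simp_all add: cube_add)

lemma frob_1X: "(1 + fps_X :: F3 fps)^(3^k) = 1 + fps_X^(3^k)"
proof (induction k)
  case 0 then show ?case by simp
next
  case (Suc k)
  have "(1 + fps_X :: F3 fps)^(3^Suc k) = ((1 + fps_X)^(3^k))^3"
    by (simp add: power_mult[symmetric] mult.commute)
  also have "\<dots> = 1 + fps_X^(3^Suc k)" unfolding Suc cube_add
    by (simp add: power_mult[symmetric] mult.commute)
  finally show ?case .
qed

definition red :: "int fps \<Rightarrow> F3 fps" where "red f = Abs_fps (\<lambda>n. of_int (f $ n))"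

lemma red_nth [simp]: "red f $ n = of_int (f $ n)" by (simp add: red_def)
lemma red_add [simp]: "red (f + g) = red f + red g" by (rule fps_ext) simp
lemma red_diff [simp]: "red (f - g) = red f - red g" by (rule fps_ext) simp
lemma red_one [simp]: "red 1 = 1" by (rule fps_ext) simp
lemma red_zero [simp]: "red 0 = 0" by (rule fps_ext) simp
lemma red_X [simp]: "red fps_X = fps_X" by (rule fps_ext) simp
lemma red_mult [simp]: "red (f * g) = red f * red g"
  by (rule fps_ext) (simp add: fps_mult_nth)
lemma red_power [simp]: "red (f ^ n) = red f ^ n"
  by (induction n) simp_all
lemma red_sum [simp]: "red (\<Sum>i\<in>S. f i) = (\<Sum>i\<in>S. red (f i))"
  by (induction S rule: infinite_finite_induct) simp_all
lemma red_prod [simp]: "red (\<Prod>i\<in>S. f i) = (\<Prod>i\<in>S. red (f i))"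
  by (induction S rule: infinite_finite_induct) simp_all
lemma red_fps_of_poly: "red (fps_of_poly p) = fps_of_poly (map_poly of_int p)"
  by (rule fps_ext) (simp add: coeff_map_poly)

definition eqm :: "nat \<Rightarrow> F3 fps \<Rightarrow> F3 fps \<Rightarrow> bool" where
  "eqm N f g \<longleftrightarrow> (\<forall>i<N. f $ i = g $ i)"

lemma eqm_refl [simp]: "eqm N f f" by (simp add: eqm_def)
lemma eqm_sym: "eqm N f g \<Longrightarrow> eqm N g f" by (simp add: eqm_def)
lemma eqm_trans: "eqm N f g \<Longrightarrow> eqm N g h \<Longrightarrow> eqm N f h" by (simp add: eqm_def)
lemma eqm_add: "eqm N f f' \<Longrightarrow> eqm N g g' \<Longrightarrow> eqm N (f + g) (f' + g')" by (simp add: eqm_def)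
lemma eqm_mult: "eqm N f f' \<Longrightarrow> eqm N g g' \<Longrightarrow> eqm N (f * g) (f' * g')"
  unfolding eqm_def fps_mult_nth by (auto intro!: sum.cong)
lemma eqm_power: "eqm N f f' \<Longrightarrow> eqm N (f ^ k) (f' ^ k)"
  by (induction k) (simp_all add: eqm_mult)
lemma eqm_mono: "eqm N f g \<Longrightarrow> M \<le> N \<Longrightarrow> eqm M f g" by (simp add: eqm_def)
lemma eqm_all: "(\<And>N. eqm N f g) \<Longrightarrow> f = g"
  by (rule fps_ext) (auto simp: eqm_def)
lemma eqm_Xpow: "N \<le> k \<Longrightarrow> eqm N (fps_X ^ k * f) 0"
  by (simp add: eqm_def fps_X_power_mult_nth)

lemma lt3pow: "n < (3::nat)^n"
  by (induction n) auto

definition PA :: "nat \<Rightarrow> F3 fps" where "PA N = (\<Prod>j<N. 1 + fps_X^(3^j))"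
definition psi :: "F3 fps" where "psi = red Psi"

lemma psi_nth: "psi $ n = PA (Suc n) $ n"
proof -
  have "psi $ n = of_int ((\<Prod>j<Suc n. 1 + fps_X ^ 3 ^ j :: int fps) $ n)"
    unfolding psi_def Psi_def by (simp only: red_nth fps_nth_Abs_fps)
  also have "\<dots> = red (\<Prod>j<Suc n. 1 + fps_X ^ 3 ^ j) $ n" by (simp only: red_nth)
  also have "\<dots> = PA (Suc n) $ n" by (simp only: red_prod red_add red_one red_power red_X PA_def)
  finally show ?thesis .
qed

lemma PA_stab: "M \<le> N \<Longrightarrow> eqm M (PA N) (PA M)"
proof (induction N)
  case 0 then show ?case by simp
next
  case (Suc N)
  show ?case
  proof (cases "M = Suc N")
    case False
    then have "M \<le> N" using Suc by simp
    have "PA (Suc N) = PA N + fps_X^(3^N) * PA N" by (simp add: PA_def algebra_simps)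
    moreover have "eqm M (fps_X^(3^N) * PA N) 0"
      by (rule eqm_Xpow) (meson \<open>M \<le> N\<close> le_trans less_imp_le_nat lt3pow)
    ultimately show ?thesis using Suc.IH[OF \<open>M \<le> N\<close>] eqm_add by fastforce
  qed simp
qed

lemma psi_eqm: "eqm N psi (PA N)"
  unfolding eqm_def psi_nth using PA_stab by (metis Suc_leI eqm_def lessI)

lemma PA_sq: "PA N ^2 * (1 + fps_X) = (1 + fps_X)^(3^N)"
proof (induction N)
  case 0 then show ?case by (simp add: PA_def)
next
  case (Suc N)
  have "PA (Suc N) ^2 * (1 + fps_X) = (PA N ^2 * (1 + fps_X)) * (1 + fps_X^(3^N))^2"
    by (simp add: PA_def power2_eq_square algebra_simps)
  also have "\<dots> = (1 + fps_X)^(3^N) * ((1 + fps_X)^(3^N))^2" by (simp add: Suc frob_1X)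
  also have "\<dots> = (1 + fps_X)^(3^Suc N)"
    by (simp add: power_mult[symmetric] power_add[symmetric])
  finally show ?case .
qed

lemma psi_sq: "psi^2 * (1 + fps_X) = 1"
proof (rule eqm_all)
  fix N
  have "eqm N (psi^2 * (1 + fps_X)) (PA N ^2 * (1 + fps_X))"
    by (intro eqm_mult eqm_power psi_eqm eqm_refl)
  moreover have "PA N ^2 * (1 + fps_X) = 1 + fps_X^(3^N) * 1"
    by (simp add: PA_sq frob_1X)
  moreover have "eqm N (1 + fps_X^(3^N) * 1) 1"
    using eqm_add[OF eqm_refl eqm_Xpow[of N "3^N" 1]] lt3pow[of N] by simp
  ultimately show "eqm N (psi^2 * (1 + fps_X)) 1" using eqm_trans by metis
qed

lemma psi_1: "psi $ 1 = 1"
  unfolding psi_nth PA_def by (simp add: fps_mult_nth numeral_2_eq_2 lessThan_Suc)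


definition tt :: "F3 fps" where "tt = fps_X * psi^4"

lemma psi4: "psi^4 * (1 + fps_X)^2 = 1"
proof -
  have "psi^4 * (1 + fps_X)^2 = (psi^2 * (1 + fps_X))^2"
    by (simp add: power_mult_distrib power_mult[symmetric])
  then show ?thesis by (simp add: psi_sq)
qed

lemma hterm_eq: "hterm k * (1 + fps_X ^ (3 ^ Suc k)) = fps_X ^ (3 ^ k) * (1 + fps_X ^ (3 ^ k))"
proof -
  let ?q = "1 + fps_X ^ (3 ^ Suc k) :: int fps"
  let ?p = "fps_X ^ (3 ^ k) * (1 + fps_X ^ (3 ^ k)) :: int fps"
  have q0: "?q $ 0 * 1 = 1" by simp
  define r where "r = ?p * fps_right_inverse ?q 1"
  have r: "r * ?q = ?p" using fps_right_inverse[OF q0] unfolding r_def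
    by (simp add: mult.assoc mult.commute)
  have qnz: "?q \<noteq> 0" using q0 by (metis fps_zero_nth mult_zero_left zero_neq_one)
  have "hterm k = r" unfolding hterm_def fps_quot_def
  proof (rule the_equality)
    show "r * ?q = ?p" by (rule r)
    fix r' assume "r' * ?q = ?p"
    then show "r' = r" using r qnz by (metis mult_right_cancel)
  qed
  then show ?thesis using r by simp
qed

lemma onepX_nz: "(1 + fps_X :: F3 fps) ^ n \<noteq> 0"
proof -
  have "(1 + fps_X :: F3 fps) $ 0 = 1" by simp
  then have "(1 + fps_X :: F3 fps) \<noteq> 0" by (metis fps_zero_nth zero_neq_one)
  then show ?thesis by simp
qed

lemma red_hterm: "red (hterm k) = tt ^ (3 ^ k)"
proof -
  have a: "red (hterm k) * (1 + fps_X)^(3^Suc k) = fps_X^(3^k) * (1 + fps_X)^(3^k)"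
    using arg_cong[OF hterm_eq[of k], of red] by (simp only: red_mult red_add red_one red_power red_X frob_1X)
  have "tt^(3^k) * (1 + fps_X)^(3^Suc k)
      = fps_X^(3^k) * ((psi^4 * (1 + fps_X)^2)^(3^k) * (1 + fps_X)^(3^k))"
    unfolding tt_def
    by (simp add: power_mult_distrib power_mult[symmetric] power_add[symmetric] algebra_simps)
  also have "\<dots> = fps_X^(3^k) * (1 + fps_X)^(3^k)" by (simp add: psi4)
  finally show ?thesis using a onepX_nz by (metis mult_right_cancel)
qed

fun HtrA :: "nat \<Rightarrow> nat list \<Rightarrow> F3 fps" where
  "HtrA N [] = 1"
| "HtrA N (a # as) = (\<Sum>k<N. (tt^(3^k))^a * HtrA k as)"

lemma red_Htr: "red (Htr N as) = HtrA N as"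
  by (induction N as rule: HtrA.induct) (simp_all add: red_hterm)

lemma HtrA_0_Cons: "HtrA 0 (a # as) = 0" by simp

lemma pow3: "(((x::F3 fps)^(3^k))^m)^3 = (x^(3^Suc k))^m"
  by (simp add: power_mult[symmetric] mult_ac)

lemma HtrA_frob: "HtrA (Suc N) (b @ [m]) = (HtrA N (b @ [m]))^3 + tt^m * (HtrA N b)^3"
proof (induction b arbitrary: N)
  case Nil
  have "HtrA (Suc N) [m] = (\<Sum>k<Suc N. (tt^(3^k))^m)" by simp
  also have "\<dots> = (tt^(3^0))^m + (\<Sum>k<N. (tt^(3^Suc k))^m)"
    by (rule sum.lessThan_Suc_shift)
  also have "\<dots> = (\<Sum>k<N. ((tt^(3^k))^m))^3 + tt^m"
    by (simp only: cube_sum[OF finite_lessThan] pow3) simp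
  finally show ?case by simp
next
  case (Cons a b)
  have ne: "HtrA 0 (b @ [m]) = 0" by (cases b) simp_all
  have "HtrA (Suc N) ((a # b) @ [m]) = (\<Sum>k<Suc N. (tt^(3^k))^a * HtrA k (b @ [m]))" by simp
  also have "\<dots> = (tt^(3^0))^a * HtrA 0 (b @ [m]) + (\<Sum>k<N. (tt^(3^Suc k))^a * HtrA (Suc k) (b @ [m]))"
    by (rule sum.lessThan_Suc_shift)
  also have "\<dots> = (\<Sum>k<N. (tt^(3^Suc k))^a * HtrA (Suc k) (b @ [m]))"
    by (simp add: ne)
  also have "\<dots> = (\<Sum>k<N. ((tt^(3^k))^a)^3 * ((HtrA k (b @ [m]))^3 + tt^m * (HtrA k b)^3))"
    by (simp only: Cons pow3)
  also have "\<dots> = (\<Sum>k<N. ((tt^(3^k))^a * HtrA k (b @ [m]))^3)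
       + tt^m * (\<Sum>k<N. ((tt^(3^k))^a * HtrA k b)^3)"
    by (simp add: power_mult_distrib distrib_left sum.distrib sum_distrib_left algebra_simps)
  also have "\<dots> = (HtrA N ((a # b) @ [m]))^3 + tt^m * (HtrA N (a # b))^3"
    by (simp add: cube_sum)
  finally show ?case .
qed

lemma eqm_sum0: "(\<And>i. i \<in> S \<Longrightarrow> eqm M (f i) 0) \<Longrightarrow> eqm M (\<Sum>i\<in>S. f i) 0"
  by (simp add: eqm_def fps_sum_nth)

lemma sum_split_lessThan: "(M::nat) \<le> N \<Longrightarrow> (\<Sum>k<N. f k) = (\<Sum>k<M. f k) + (\<Sum>k\<in>{M..<N}. f k)"
  using sum.atLeastLessThan_concat[of 0 M N f] by (simp add: atLeast0LessThan)

lemma HtrA_stab: "\<forall>x\<in>set as. 0 < x \<Longrightarrow> M \<le> N \<Longrightarrow> eqm M (HtrA N as) (HtrA M as)"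
proof (cases as)
  case (Cons a as')
  assume pos: "\<forall>x\<in>set as. 0 < x" and MN: "M \<le> N"
  have apos: "0 < a" using pos Cons by simp
  have S0: "eqm M (\<Sum>k\<in>{M..<N}. (tt^(3^k))^a * HtrA k as') 0"
  proof (rule eqm_sum0)
    fix k assume k: "k \<in> {M..<N}"
    have "(tt^(3^k))^a = fps_X^(3^k*a) * psi^(4*(3^k*a))"
      unfolding tt_def by (simp add: power_mult_distrib power_mult[symmetric] mult_ac)
    moreover have "M \<le> 3^k*a"
    proof -
      have "M \<le> k" using k by simp
      also have "k < 3^k" by (rule lt3pow)
      also have "3^k \<le> 3^k*a" using apos by simp
      finally show ?thesis by simp
    qed
    ultimately show "eqm M ((tt^(3^k))^a * HtrA k as') 0" by (simp add: eqm_Xpow mult.assoc)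
  qed
  have "HtrA N as = HtrA M as + (\<Sum>k\<in>{M..<N}. (tt^(3^k))^a * HtrA k as')"
    unfolding Cons HtrA.simps by (rule sum_split_lessThan[OF MN])
  then show ?thesis using eqm_add[OF eqm_refl[of M "HtrA M as"] S0] by simp
qed simp

definition h :: "nat list \<Rightarrow> F3 fps" where "h as = red (Htilde as)"

lemma h_nth: "h as $ n = HtrA (Suc n) as $ n"
  unfolding h_def Htilde_def by (simp add: red_Htr[symmetric])

lemma h_eqm: assumes pos: "\<forall>x\<in>set as. 0 < x" shows "eqm N (h as) (HtrA N as)"
  unfolding eqm_def
proof (intro allI impI)
  fix i assume i: "i < N"
  have "eqm (Suc i) (HtrA N as) (HtrA (Suc i) as)" using HtrA_stab[OF pos] i by simp
  then show "h as $ i = HtrA N as $ i" by (simp add: h_nth eqm_def)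
qed

lemma h_nil: "h [] = 1"
proof -
  have "Htilde [] = 1" unfolding Htilde_def by (rule fps_ext) simp
  then show ?thesis by (simp add: h_def)
qed

lemma h_rec:
  assumes pos: "\<forall>x\<in>set (b @ [m]). 0 < x"
  shows "h (b @ [m]) = h (b @ [m])^3 + tt^m * h b^3"
proof (rule eqm_all)
  fix N
  have posb: "\<forall>x\<in>set b. 0 < x" using pos by simp
  have "eqm N (h (b @ [m])) (HtrA (Suc N) (b @ [m]))"
    by (rule eqm_mono[OF h_eqm[OF pos]]) simp
  moreover have "eqm N (HtrA N (b @ [m])^3 + tt^m * HtrA N b^3) (h (b @ [m])^3 + tt^m * h b^3)"
  proof (rule eqm_add)
    show "eqm N (HtrA N (b @ [m]) ^ 3) (h (b @ [m]) ^ 3)"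
      by (rule eqm_power[OF eqm_sym[OF h_eqm[OF pos]]])
    show "eqm N (tt ^ m * HtrA N b ^ 3) (tt ^ m * h b ^ 3)"
      by (rule eqm_mult[OF eqm_refl eqm_power[OF eqm_sym[OF h_eqm[OF posb]]]])
  qed
  ultimately show "eqm N (h (b @ [m])) (h (b @ [m])^3 + tt^m * h b^3)"
    unfolding HtrA_frob by (rule eqm_trans)
qed


definition iota :: "F3 poly \<Rightarrow> F3 fps" where "iota p = poly (map_poly fps_const p) psi"

lemma fps_const_sum: "fps_const (\<Sum>i\<in>S. f i) = (\<Sum>i\<in>S. fps_const (f i))"
  by (induction S rule: infinite_finite_induct) (simp_all add: fps_const_add[symmetric] del: fps_const_add)

lemma mpc_add: "map_poly fps_const (p + q) = map_poly fps_const p + map_poly fps_const (q :: F3 poly)"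
  by (rule poly_eqI) (simp add: coeff_map_poly)

lemma mpc_mult: "map_poly fps_const (p * q) = map_poly fps_const p * map_poly fps_const (q :: F3 poly)"
  by (rule poly_eqI) (simp add: coeff_map_poly coeff_mult fps_const_sum)

lemma iota_add [simp]: "iota (p + q) = iota p + iota q"
  by (simp add: iota_def mpc_add)
lemma iota_mult [simp]: "iota (p * q) = iota p * iota q"
  by (simp add: iota_def mpc_mult)
lemma iota_one [simp]: "iota 1 = 1" by (simp add: iota_def)
lemma iota_zero [simp]: "iota 0 = 0" by (simp add: iota_def)
lemma iota_minus [simp]: "iota (- p) = - iota p"
  using iota_add[of "-p" p] by (simp add: eq_neg_iff_add_eq_0)
lemma iota_diff [simp]: "iota (p - q) = iota p - iota q"
  using iota_add[of p "-q"] by simp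
lemma iota_power [simp]: "iota (p ^ n) = iota p ^ n" by (induction n) simp_all
lemma iota_sum [simp]: "iota (\<Sum>i\<in>S. f i) = (\<Sum>i\<in>S. iota (f i))"
  by (induction S rule: infinite_finite_induct) simp_all
lemma iota_pCons: "iota (pCons a p) = fps_const a + psi * iota p"
  by (simp add: iota_def map_poly_pCons)
lemma iota_const: "iota [:a:] = fps_const a" by (simp add: iota_pCons)
lemma iota_smult [simp]: "iota (smult a p) = fps_const a * iota p"
proof -
  have "smult a p = [:a:] * p" by simp
  then show ?thesis by (simp only: iota_mult iota_const)
qed
lemma fcm1: "fps_const (-1::F3) = -1"
  by (simp add: fps_const_neg[symmetric] del: fps_const_neg)
lemma iota_w: "iota [:0, 1:] = psi" by (simp add: iota_pCons)

lemma iota_nth0: "iota p $ 0 = poly p (psi $ 0)"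
  by (induction p) (simp_all add: iota_pCons)

lemma iota_inj: assumes "iota p = 0" shows "p = 0"
proof (rule ccontr)
  assume "p \<noteq> 0"
  define a where "a = psi $ 0"
  obtain q where q: "p = [:- a, 1:] ^ order a p * q" "\<not> [:- a, 1:] dvd q"
    using order_decomp[OF \<open>p \<noteq> 0\<close>] by blast
  have "iota [:- a, 1:] = psi - fps_const a" by (simp add: iota_pCons)
  moreover have "psi - fps_const a \<noteq> 0"
  proof
    assume "psi - fps_const a = 0"
    then have "(psi - fps_const a) $ 1 = 0" by simp
    then show False using psi_1 by simp
  qed
  moreover have "iota q \<noteq> 0"
  proof
    assume "iota q = 0"
    then have "poly q a = 0" using iota_nth0[of q] a_def by simp
    then show False using q(2) by (simp add: poly_eq_0_iff_dvd)
  qed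
  ultimately have "iota p \<noteq> 0" by (subst q(1)) simp
  then show False using assms by simp
qed

definition TT :: "F3 poly" where "TT = [:0, 0, 1, 0, -1:]"

lemma Xpsi2: "fps_X * psi^2 = 1 - psi^2"
  using psi_sq by (simp add: algebra_simps)

lemma tt_iota: "tt = iota TT"
proof -
  have "tt = (fps_X * psi^2) * psi^2" by (simp add: tt_def power_add[symmetric] mult_ac)
  also have "\<dots> = psi^2 - psi^4" by (simp add: Xpsi2 algebra_simps power_add[symmetric])
  also have "\<dots> = iota TT" by (simp add: TT_def iota_pCons power2_eq_square power4_eq_xxxx algebra_simps fcm1)
  finally show ?thesis .
qed

lemma degree_TT: "degree TT = 4" by (simp add: TT_def)
lemma TT_nz: "TT \<noteq> 0" by (simp add: TT_def)

lemma conv_poly: "degree P \<le> K \<Longrightarrow> \<exists>Q. fps_of_poly P * psi^(2*K) = iota Q"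
proof (induction P arbitrary: K)
  case (pCons a P)
  show ?case
  proof (cases "P = 0")
    case True
    then show ?thesis
      by (intro exI[of _ "[:a:] * [:0,1:]^(2*K)"]) (simp add: iota_const iota_w fps_of_poly_pCons)
  next
    case False
    then obtain K' where K: "K = Suc K'" "degree P \<le> K'"
      using pCons.prems by (cases K) auto
    obtain Q where Q: "fps_of_poly P * psi^(2*K') = iota Q" using pCons.IH[OF K(2)] by blast
    have "fps_of_poly (pCons a P) * psi^(2*K)
        = fps_const a * psi^(2*K) + (fps_X * psi^2) * (fps_of_poly P * psi^(2*K'))"
      by (simp add: fps_of_poly_pCons K algebra_simps power_add[symmetric])
    also have "\<dots> = fps_const a * psi^(2*K) + (1 - psi^2) * iota Q"
      by (simp only: Q Xpsi2)
    also have "\<dots> = iota ([:a:] * [:0,1:]^(2*K) + [:1, 0, -1:] * Q)"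
      by (simp add: iota_const iota_w iota_pCons power2_eq_square algebra_simps fcm1)
    finally show ?thesis by blast
  qed
qed (rule exI[of _ 0], simp)

definition adm :: "nat list \<Rightarrow> bool" where
  "adm xs \<longleftrightarrow> (\<forall>x\<in>set xs. 0 < x \<and> \<not> 3 dvd x)"

lemma adm_prefix: "adm k \<Longrightarrow> prefix j k \<Longrightarrow> adm j"
  unfolding adm_def by (meson prefix_order.dual_order.trans set_mono_prefix subsetD)

lemma h_rec': "adm (b @ [m]) \<Longrightarrow> h (b @ [m]) = h (b @ [m])^3 + iota TT ^ m * h b^3"
  using h_rec[of b m] by (simp add: adm_def tt_iota)

definition wt :: "nat list \<Rightarrow> nat list \<Rightarrow> F3 poly" where
  "wt k j = (-1)^(length k - length j) * TT^(sum_list (drop (length j) k))"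

lemma h_cube: "adm k \<Longrightarrow> h k ^ 3 = (\<Sum>j\<in>set (prefixes k). iota (wt k j) * h j)"
proof (induction k rule: rev_induct)
  case Nil then show ?case by (simp add: h_nil wt_def)
next
  case (snoc m b)
  have admb: "adm b" using snoc.prems by (simp add: adm_def)
  have nin: "b @ [m] \<notin> set (prefixes b)" by (auto dest: prefix_length_le)
  have wt1: "wt (b @ [m]) j = - (TT^m * wt b j)" if "prefix j b" for j
  proof -
    have lj: "length j \<le> length b" using that prefix_length_le by blast
    then have "length (b @ [m]) - length j = Suc (length b - length j)" by simp
    moreover have "drop (length j) (b @ [m]) = drop (length j) b @ [m]" using lj by simp
    ultimately show ?thesis by (simp add: wt_def power_add algebra_simps)
  qed
  have "h (b @ [m]) ^ 3 = h (b @ [m]) - iota TT ^ m * h b ^ 3"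
    using h_rec'[OF snoc.prems] by (simp add: algebra_simps)
  also have "\<dots> = iota (wt (b @ [m]) (b @ [m])) * h (b @ [m])
      + (\<Sum>j\<in>set (prefixes b). iota (wt (b @ [m]) j) * h j)"
  proof -
    have "(\<Sum>j\<in>set (prefixes b). iota (wt (b @ [m]) j) * h j)
        = (\<Sum>j\<in>set (prefixes b). - (iota TT^m * (iota (wt b j) * h j)))"
      by (rule sum.cong) (simp_all add: wt1 mult.assoc)
    also have "\<dots> = - (iota TT ^ m * h b ^ 3)"
      by (simp add: sum_negf sum_distrib_left snoc.IH[OF admb])
    finally show ?thesis by (simp add: wt_def)
  qed
  also have "\<dots> = (\<Sum>j\<in>set (prefixes (b @ [m])). iota (wt (b @ [m]) j) * h j)"
    using nin by simp
  finally show ?case .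
qed


lemma degree_sum_dom:
  fixes f :: "'b \<Rightarrow> F3 poly"
  assumes "finite S" "i0 \<in> S" "\<forall>i\<in>S-{i0}. degree (f i) < degree (f i0)"
  shows "degree (\<Sum>i\<in>S. f i) = degree (f i0)"
proof -
  have eq: "(\<Sum>i\<in>S. f i) = f i0 + (\<Sum>i\<in>S-{i0}. f i)" using assms by (simp add: sum.remove)
  show ?thesis
  proof (cases "S - {i0} = {}")
    case True then show ?thesis by (simp only: eq True sum.empty) simp
  next
    case False
    then have "0 < degree (f i0)" using assms(3) by auto
    then have "degree (\<Sum>i\<in>S-{i0}. f i) < degree (f i0)"
      using assms(3) by (intro degree_sum_less) auto
    then show ?thesis using eq by (simp add: degree_add_eq_left)
  qed
qed

lemma final_contra:
  fixes C u G :: "F3 poly"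
  assumes C: "C \<noteq> 0" and dG: "degree G = degree C + 4*M" and M: "0 < M" "\<not> 3 dvd M"
    and eq: "u^3 - C^2*u = C^2*G"
  shows False
proof -
  have G: "G \<noteq> 0" using dG M by auto
  have dR: "degree (C^2*G) = 3*degree C + 4*M"
    using C G by (simp add: degree_mult_eq degree_power_eq dG)
  show False
  proof (cases "u = 0")
    case True
    then have "C^2 * G = 0" using eq by simp
    then show False using C G by simp
  next
    case u: False
    show False
    proof (cases "degree u > degree C")
      case True
      have d1: "degree (C^2*u) = 2*degree C + degree u"
        using C u by (simp add: degree_mult_eq degree_power_eq)
      have d2: "degree (u^3) = 3 * degree u" using u by (simp add: degree_power_eq)
      have "degree (u^3 + - (C^2*u)) = degree (u^3)"
        using d1 d2 True by (intro degree_add_eq_left) simp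
      then have "3 * degree u = 3 * degree C + 4 * M" using eq dR d2 by simp
      then have "3 dvd 4 * M" by presburger
      then show False using M by presburger
    next
      case False
      have "degree (u^3 - C^2*u) \<le> max (degree (u^3)) (degree (C^2*u))"
        by (rule degree_diff_le_max)
      also have "\<dots> \<le> 3 * degree C"
      proof -
        have "degree (u^3) \<le> 3 * degree u" using degree_power_le[of u 3] by (simp add: mult.commute)
        moreover have "degree (C^2*u) \<le> degree (C^2) + degree u" by (rule degree_mult_le)
        moreover have "degree (C^2) \<le> 2 * degree C" using degree_power_le[of C 2] by (simp add: mult.commute)
        ultimately show ?thesis using False by simp
      qed
      finally show False using eq dR M by simp
    qed
  qed
qed

lemma prefix_eq_len: "prefix xs ys \<Longrightarrow> length xs = length ys \<Longrightarrow> xs = ys"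
  by (auto simp: prefix_def)


lemma core_step:
  assumes IH: "\<And>U c. finite U \<Longrightarrow> \<forall>k\<in>U. adm k \<and> length k \<le> d \<Longrightarrow>
      (\<Sum>k\<in>U. iota (c k) * h k) = 0 \<Longrightarrow> \<forall>k\<in>U. c k = 0"
  shows "finite U \<Longrightarrow> \<forall>k\<in>U. adm k \<and> length k \<le> Suc d \<Longrightarrow>
      card {k\<in>U. length k = Suc d \<and> c k \<noteq> 0} = n \<Longrightarrow>
      (\<Sum>k\<in>U. iota (c k) * h k) = 0 \<Longrightarrow> \<forall>k\<in>U. c k = 0"
proof (induction n arbitrary: U c rule: less_induct)
  case (less n U c)
  have finU: "finite U" and AU: "\<forall>k\<in>U. adm k \<and> length k \<le> Suc d"
      and cardn: "card {k\<in>U. length k = Suc d \<and> c k \<noteq> 0} = n"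
      and rel: "(\<Sum>k\<in>U. iota (c k) * h k) = 0" using less.prems by auto
    define top where "top = {k\<in>U. length k = Suc d \<and> c k \<noteq> 0}"
    show "\<forall>k\<in>U. c k = 0"
    proof (cases "top = {}")
      case True
      define U' where "U' = {k\<in>U. length k \<le> d}"
      have finU': "finite U'" using finU unfolding U'_def by simp
      have sub: "U' \<subseteq> U" unfolding U'_def by auto
      have z: "c k = 0" if "k \<in> U - U'" for k
      proof -
        have "length k = Suc d" using that AU unfolding U'_def by (auto simp: le_Suc_eq)
        then show ?thesis using that True unfolding top_def by blast
      qed
      have "(\<Sum>k\<in>U. iota (c k) * h k) = (\<Sum>k\<in>U'. iota (c k) * h k)"
        by (rule sum.mono_neutral_right[OF finU sub]) (simp add: z)
      then have rel': "(\<Sum>k\<in>U'. iota (c k) * h k) = 0" using rel by simp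
      have AU': "\<forall>k\<in>U'. adm k \<and> length k \<le> d" using AU unfolding U'_def by simp
      have "\<forall>k\<in>U'. c k = 0" by (rule IH[OF finU' AU' rel'])
      then show ?thesis using z by blast
    next
      case False
      then obtain a where a: "a \<in> U" "length a = Suc d" "c a \<noteq> 0" unfolding top_def by auto
      define C where "C = c a"
      have C: "C \<noteq> 0" using a C_def by simp
      define V where "V = (\<Union>k\<in>U. set (prefixes k))"
      have finV: "finite V" unfolding V_def using finU by simp
      have pcV: "i \<in> V" if jV: "j \<in> V" and ij: "prefix i j" for i j
      proof -
        obtain k where k: "k \<in> U" "prefix j k" using jV by (auto simp: V_def)
        then have "prefix i k" using ij by (metis prefix_order.trans)
        then show ?thesis using k(1) by (auto simp: V_def)
      qed
      have AV: "adm j \<and> length j \<le> Suc d" if jV: "j \<in> V" for j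
      proof -
        obtain k where k: "k \<in> U" "prefix j k" using jV by (auto simp: V_def)
        then have "adm k" "length k \<le> Suc d" using AU by auto
        then show ?thesis using k adm_prefix prefix_length_le by fastforce
      qed
      have UV: "U \<subseteq> V" unfolding V_def by auto
      define c0 where "c0 k = (if k \<in> U then c k else 0)" for k
      have rel0: "(\<Sum>k\<in>V. iota (c0 k) * h k) = 0"
      proof -
        have "(\<Sum>k\<in>V. iota (c0 k) * h k) = (\<Sum>k\<in>U. iota (c0 k) * h k)"
          by (rule sum.mono_neutral_right) (use finV UV c0_def in auto)
        also have "\<dots> = 0" using rel by (simp add: c0_def)
        finally show ?thesis .
      qed
      define F where "F j = (\<Sum>k\<in>{k\<in>V. prefix j k}. c0 k ^ 3 * wt k j)" for j
      define c' where "c' j = C^3 * c0 j - C * F j" for j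
      have pref_set: "{j\<in>V. prefix j k} = set (prefixes k)" if "k \<in> V" for k
        using that pcV by auto
      have relF: "(\<Sum>j\<in>V. iota (F j) * h j) = 0"
      proof -
        have "(\<Sum>j\<in>V. iota (F j) * h j)
            = (\<Sum>j\<in>V. \<Sum>k\<in>{k\<in>V. prefix j k}. iota (c0 k ^ 3 * wt k j) * h j)"
          by (simp add: F_def sum_distrib_right)
        also have "\<dots> = (\<Sum>k\<in>V. \<Sum>j\<in>{j\<in>V. prefix j k}. iota (c0 k ^ 3 * wt k j) * h j)"
          by (rule sum.swap_restrict[OF finV finV])
        also have "\<dots> = (\<Sum>k\<in>V. iota (c0 k) ^ 3 * (\<Sum>j\<in>set (prefixes k). iota (wt k j) * h j))"
          by (rule sum.cong) (simp_all add: pref_set sum_distrib_left mult.assoc)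
        also have "\<dots> = (\<Sum>k\<in>V. (iota (c0 k) * h k) ^ 3)"
          by (rule sum.cong) (simp_all add: AV h_cube power_mult_distrib)
        also have "\<dots> = (\<Sum>k\<in>V. iota (c0 k) * h k) ^ 3" by (simp add: cube_sum[OF finV])
        also have "\<dots> = 0" by (simp add: rel0)
        finally show ?thesis .
      qed
      have rel': "(\<Sum>j\<in>V. iota (c' j) * h j) = 0"
      proof -
        have "(\<Sum>j\<in>V. iota (c' j) * h j)
            = iota C ^ 3 * (\<Sum>j\<in>V. iota (c0 j) * h j) - iota C * (\<Sum>j\<in>V. iota (F j) * h j)"
          by (simp add: c'_def sum_distrib_left sum_subtractf algebra_simps)
        then show ?thesis by (simp add: rel0 relF)
      qed
      have Ftop: "F j = c0 j ^ 3" if jV: "j \<in> V" and lj: "length j = Suc d" for j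
      proof -
        have "{k\<in>V. prefix j k} = {j}"
        proof (intro equalityI subsetI)
          fix x assume "x \<in> {k\<in>V. prefix j k}"
          then have xV: "x \<in> V" and pj: "prefix j x" by auto
          have "length x \<le> Suc d" using AV[OF xV] by simp
          moreover have "length j \<le> length x" using pj by (rule prefix_length_le)
          ultimately have "length j = length x" using lj by simp
          then have "j = x" using pj prefix_eq_len by blast
          then show "x \<in> {j}" by simp
        next
          fix x assume "x \<in> {j}"
          then show "x \<in> {k\<in>V. prefix j k}" using jV by simp
        qed
        then show ?thesis by (simp add: F_def wt_def)
      qed
      define top' where "top' = {k\<in>V. length k = Suc d \<and> c' k \<noteq> 0}"
      have "top' \<subseteq> top - {a}"
      proof
        fix k assume k: "k \<in> top'"
        then have kV: "k \<in> V" and lk: "length k = Suc d" and ck: "c' k \<noteq> 0"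
          unfolding top'_def by auto
        have c'k: "c' k = C^3 * c0 k - C * c0 k ^ 3" using Ftop[OF kV lk] by (simp add: c'_def)
        then have "c0 k \<noteq> 0" using ck by auto
        then have "k \<in> U" "c k \<noteq> 0" by (auto simp: c0_def split: if_splits)
        moreover have "k \<noteq> a"
        proof
          assume "k = a"
          then have "c0 k = C" using a by (simp add: c0_def C_def)
          then show False using ck c'k by (simp add: power3_eq_cube algebra_simps)
        qed
        ultimately show "k \<in> top - {a}" unfolding top_def using lk by auto
      qed
      moreover have "finite top" unfolding top_def using finU by simp
      moreover have "a \<in> top" unfolding top_def using a by simp
      ultimately have "card top' < card top"
      proof -
        assume sub: "top' \<subseteq> top - {a}" and fin: "finite top" and at: "a \<in> top"
        have "top' \<subset> top" using sub at by blast
        then show ?thesis by (rule psubset_card_mono[OF fin])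
      qed
      then have "card top' < n" using cardn unfolding top_def by simp
      have AV': "\<forall>j\<in>V. adm j \<and> length j \<le> Suc d" using AV by blast
      have c'0: "\<forall>j\<in>V. c' j = 0"
        by (rule less.IH[OF \<open>card top' < n\<close> finV AV' _ rel']) (simp add: top'_def)
      have cube_top: "c0 k ^ 3 = C^2 * c0 k" if "k \<in> V" "length k = Suc d" for k
      proof -
        have "C^3 * c0 k - C * c0 k ^ 3 = 0"
          using c'0 that Ftop[OF that] by (simp add: c'_def)
        then have "C * (C^2 * c0 k - c0 k ^ 3) = 0" by (simp add: algebra_simps power3_eq_cube power2_eq_square)
        then show ?thesis using C by simp
      qed
      define b where "b = butlast a"
      have ane: "a \<noteq> []" using a by auto
      have ab: "a = b @ [last a]" using ane unfolding b_def by simp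
      have lb: "length b = d" using a unfolding b_def by simp
      have bV: "b \<in> V" using pcV[of a b] UV a(1) ab by (auto intro: prefixI)
      define W where "W = {k\<in>V. length k = Suc d \<and> butlast k = b}"
      have finW: "finite W" unfolding W_def using finV by simp
      have Wform: "k = b @ [last k]" if kW: "k \<in> W" for k
      proof -
        have lk: "length k = Suc d" and bk: "butlast k = b" using kW unfolding W_def by auto
        have "k \<noteq> []" using lk by auto
        then have "k = butlast k @ [last k]" by simp
        then show ?thesis using bk by simp
      qed
      have setb: "{k\<in>V. prefix b k} = insert b W"
      proof (intro equalityI subsetI)
        fix k assume "k \<in> {k\<in>V. prefix b k}"
        then have kV: "k \<in> V" and pk: "prefix b k" by auto
        then obtain zs where zs: "k = b @ zs" by (auto simp: prefix_def)
        have "length k \<le> Suc d" using AV[OF kV] by simp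
        then have lzs: "length zs \<le> 1" using zs lb by simp
        show "k \<in> insert b W"
        proof (cases zs)
          case Nil then show ?thesis using zs by simp
        next
          case (Cons x zs')
          then have "zs' = []" using lzs by simp
          then have "k = b @ [x]" using zs Cons by simp
          then show ?thesis using kV lb unfolding W_def by simp
        qed
      next
        fix k assume k: "k \<in> insert b W"
        show "k \<in> {k\<in>V. prefix b k}"
        proof (cases "k = b")
          case True then show ?thesis using bV by simp
        next
          case False
          then have kW: "k \<in> W" using k by simp
          then have "k \<in> V" unfolding W_def by simp
          moreover have "prefix b k" using Wform[OF kW] by (auto intro: prefixI)
          ultimately show ?thesis by simp
        qed
      qed
      have bW: "b \<notin> W" unfolding W_def using lb by simp
      have wtW: "wt k b = - (TT ^ last k)" if kW: "k \<in> W" for k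
      proof -
        have "wt k b = wt (b @ [last k]) b" using Wform[OF kW] by simp
        also have "\<dots> = - (TT ^ last k)" by (simp add: wt_def)
        finally show ?thesis .
      qed
      define G where "G = (\<Sum>k\<in>W. c0 k * TT ^ last k)"
      have Fb: "F b = c0 b ^ 3 - C^2 * G"
      proof -
        have "F b = c0 b ^ 3 * wt b b + (\<Sum>k\<in>W. c0 k ^ 3 * wt k b)"
          unfolding F_def setb using finW bW by simp
        also have "(\<Sum>k\<in>W. c0 k ^ 3 * wt k b) = (\<Sum>k\<in>W. - (C^2 * (c0 k * TT ^ last k)))"
        proof (rule sum.cong[OF refl])
          fix k assume kW: "k \<in> W"
          have "c0 k ^ 3 = C^2 * c0 k" using kW unfolding W_def by (intro cube_top) auto
          then show "c0 k ^ 3 * wt k b = - (C^2 * (c0 k * TT ^ last k))"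
            by (simp add: wtW[OF kW])
        qed
        also have "wt b b = 1" by (simp add: wt_def)
        also have "c0 b ^ 3 * 1 + (\<Sum>k\<in>W. - (C^2 * (c0 k * TT ^ last k)))
            = c0 b ^ 3 - (\<Sum>k\<in>W. C^2 * (c0 k * TT ^ last k))"
          by (simp add: sum_negf)
        finally show ?thesis by (simp add: G_def sum_distrib_left)
      qed
      have eqb: "c0 b ^ 3 - C^2 * c0 b = C^2 * G"
      proof -
        have "C^3 * c0 b - C * (c0 b ^ 3 - C^2 * G) = 0" using c'0 bV Fb by (simp add: c'_def)
        then have "C * (C^2 * c0 b - c0 b ^ 3 + C^2 * G) = 0"
          by (simp add: algebra_simps power3_eq_cube power2_eq_square)
        then have e: "C^2 * c0 b - c0 b ^ 3 + C^2 * G = 0" using C by simp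
        have "c0 b ^ 3 - C^2 * c0 b = (c0 b ^ 3 - C^2 * c0 b) + (C^2 * c0 b - c0 b ^ 3 + C^2 * G)"
          using e by simp
        also have "\<dots> = C^2 * G" by (simp add: algebra_simps)
        finally show ?thesis .
      qed
      define W' where "W' = {k\<in>W. c0 k \<noteq> 0}"
      have aW': "a \<in> W'" unfolding W'_def W_def using a UV b_def C c0_def C_def by auto
      have finW': "finite W'" unfolding W'_def using finW by simp
      define M where "M = Max (last ` W')"
      have "M \<in> last ` W'" unfolding M_def using finW' aW' by (intro Max_in) auto
      then obtain k0 where k0: "k0 \<in> W'" "last k0 = M" by auto
      have Mmax: "last k \<le> M" if "k \<in> W'" for k
        using that finW' unfolding M_def by simp
      have k0W: "k0 \<in> W" using k0 unfolding W'_def by simp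
      have admk0: "adm k0" using k0W AV unfolding W_def by simp
      have "last k0 \<in> set k0" using k0W unfolding W_def by (auto intro: last_in_set)
      then have Mpos: "0 < M" and M3: "\<not> 3 dvd M" using admk0 k0 unfolding adm_def by auto
      have degk: "degree (c0 k * TT ^ last k) = degree C + 4 * last k" if "k \<in> W'" for k
      proof -
        have ck: "c0 k \<noteq> 0" using that unfolding W'_def by simp
        have "c0 k ^ 3 = C^2 * c0 k" using that cube_top unfolding W'_def W_def by simp
        then have "c0 k ^ 2 = C ^ 2" using ck
          by (metis (no_types, lifting) mult.commute mult_cancel_left power2_eq_square power3_eq_cube mult.assoc)
        then have "2 * degree (c0 k) = 2 * degree C"
          using ck C by (metis degree_power_eq)
        then show ?thesis using ck TT_nz by (simp add: degree_mult_eq degree_power_eq degree_TT)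
      qed
      have dG: "degree G = degree C + 4 * M"
      proof -
        have "degree G = degree (c0 k0 * TT ^ last k0)"
          unfolding G_def
        proof (rule degree_sum_dom[OF finW k0W], intro ballI)
          fix k assume k: "k \<in> W - {k0}"
          show "degree (c0 k * TT ^ last k) < degree (c0 k0 * TT ^ last k0)"
          proof (cases "c0 k = 0")
            case True then show ?thesis using degk[OF k0(1)] Mpos k0 by simp
          next
            case False
            then have kW': "k \<in> W'" using k unfolding W'_def by simp
            have "last k \<noteq> M"
            proof
              assume "last k = M"
              then have "k = k0" using Wform[of k] Wform[OF k0W] k k0 by auto
              then show False using k by simp
            qed
            then have "last k < M" using Mmax[OF kW'] by simp
            then show ?thesis using degk[OF kW'] degk[OF k0(1)] k0 by simp
          qed
        qed
        then show ?thesis using degk[OF k0(1)] k0 by simp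
      qed
      show ?thesis using final_contra[OF C dG Mpos M3 eqb] by simp
    qed
qed

lemma core_all:
  "finite U \<Longrightarrow> \<forall>k\<in>U. adm k \<and> length k \<le> d \<Longrightarrow>
      (\<Sum>k\<in>U. iota (c k) * h k) = 0 \<Longrightarrow> \<forall>k\<in>U. c k = 0"
proof (induction d arbitrary: U c)
  case 0
  have Unil: "U \<subseteq> {[]}"
  proof
    fix x assume "x \<in> U"
    then have "length x \<le> 0" using 0(2) by blast
    then show "x \<in> {[]}" by simp
  qed
  show ?case
  proof
    fix k assume k: "k \<in> U"
    then have Ueq: "U = {[]}" using Unil by blast
    have "(\<Sum>k\<in>U. iota (c k) * h k) = iota (c [])" unfolding Ueq by (simp add: h_nil)
    then have "iota (c []) = 0" using 0(3) by simp
    then have "c [] = 0" by (rule iota_inj)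
    then show "c k = 0" using k Ueq by simp
  qed
next
  case (Suc d)
  show ?case by (rule core_step[OF Suc.IH Suc.prems(1,2) refl Suc.prems(3)])
qed

theorem core:
  assumes "finite U" "\<forall>k\<in>U. adm k" "(\<Sum>k\<in>U. iota (c k) * h k) = 0"
  shows "\<forall>k\<in>U. c k = 0"
proof -
  define d where "d = Max (length ` U)"
  have "length k \<le> d" if "k \<in> U" for k
    using that assms(1) unfolding d_def by (simp add: Max_ge)
  then have "\<forall>k\<in>U. adm k \<and> length k \<le> d" using assms(2) by blast
  then show ?thesis by (rule core_all[OF assms(1) _ assms(3)])
qed


lemma psi_nz: "psi \<noteq> 0"
  using psi_1 by (metis fps_zero_nth zero_neq_one)

lemma sep:
  fixes A B :: "F3 poly"
  assumes "fps_of_poly A + psi * fps_of_poly B = 0"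
  shows "A = 0 \<and> B = 0"
proof -
  have a: "fps_of_poly A = - (psi * fps_of_poly B)" using assms by (simp add: eq_neg_iff_add_eq_0)
  have f11: "fps_of_poly [:1,1:] = (1 + fps_X :: F3 fps)"
    by (simp add: fps_of_poly_pCons)
  have "fps_of_poly ([:1,1:] * A^2) = (1 + fps_X) * (fps_of_poly A)^2"
    by (simp only: fps_of_poly_mult fps_of_poly_power f11)
  also have "\<dots> = (1 + fps_X) * (psi * fps_of_poly B)^2" by (simp only: a power2_minus)
  also have "\<dots> = (psi^2 * (1 + fps_X)) * fps_of_poly B ^ 2" by (simp add: power_mult_distrib mult_ac)
  also have "\<dots> = fps_of_poly (B^2)" by (simp add: psi_sq fps_of_poly_power)
  finally have eq: "[:1,1:] * A^2 = B^2" by (simp only: fps_of_poly_eq_iff)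
  have B0: "B = 0"
  proof (rule ccontr)
    assume B: "B \<noteq> 0"
    then have "A \<noteq> 0" using eq by auto
    then have "degree ([:1,1:] * A^2) = degree [:1,1::F3:] + degree (A^2)"
      by (intro degree_mult_eq) simp_all
    then have "degree ([:1,1:] * A^2) = 1 + 2 * degree A"
      using \<open>A \<noteq> 0\<close> by (simp add: degree_power_eq)
    moreover have "degree (B^2) = 2 * degree B" using B by (simp add: degree_power_eq)
    ultimately have "1 + 2 * degree A = 2 * degree B" using eq by simp
    then show False by presburger
  qed
  then have "fps_of_poly A = 0" using a by simp
  then show ?thesis using B0 by (simp add: fps_of_poly_eq_iff[of A 0, simplified])
qed

lemma red_fam: "red (fam i) = (if fst i then psi else 1) * h (snd i)"
proof -
  have "red (fam i) = red (if fst i then Psi else 1) * red (Htilde (snd i))"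
    by (simp only: fam_def red_mult)
  then show ?thesis by (cases "fst i") (simp_all only: h_def psi_def if_True if_False red_one)
qed

lemma map_poly_of_int_0:
  assumes "map_poly (of_int :: int \<Rightarrow> F3) p = 0" shows "3 dvd coeff p n"
proof -
  have "coeff (map_poly (of_int :: int \<Rightarrow> F3) p) n = 0" using assms by simp
  then show ?thesis by (simp add: coeff_map_poly of_int_F3_eq0)
qed

lemma adm_fam: assumes "i \<in> fam_index" shows "adm (snd i)"
proof (cases i)
  case (Pair b as)
  then show ?thesis using assms unfolding fam_index_def adm_def by auto
qed

lemma mod3: "lin_indep_mod 3 fam fam_index"
  unfolding lin_indep_mod_def
proof (intro allI impI)
  fix S :: "(bool \<times> nat list) set" and p
  assume finS: "finite S" and SI: "S \<subseteq> fam_index"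
    and dv: "\<forall>n. 3 dvd (\<Sum>i\<in>S. fps_of_poly (p i) * fam i) $ n"
  define P where "P i = map_poly (of_int :: int \<Rightarrow> F3) (p i)" for i
  define e where "e i = (if fst i then psi else 1)" for i :: "bool \<times> nat list"
  have red0: "red (\<Sum>i\<in>S. fps_of_poly (p i) * fam i) = 0"
    by (rule fps_ext) (simp only: red_nth fps_zero_nth of_int_F3_eq0 dv[rule_format])
  then have rel1: "(\<Sum>i\<in>S. fps_of_poly (P i) * (e i * h (snd i))) = 0"
    by (simp add: red_fps_of_poly red_fam P_def e_def)
  define K where "K = (\<Sum>i\<in>S. degree (P i))"
  have "\<forall>i\<in>S. \<exists>Q. fps_of_poly (P i) * psi^(2*K) = iota Q"
  proof
    fix i assume "i \<in> S"
    then have "degree (P i) \<le> K" unfolding K_def using finS by (intro member_le_sum) auto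
    then show "\<exists>Q. fps_of_poly (P i) * psi^(2*K) = iota Q" by (rule conv_poly)
  qed
  from bchoice[OF this] obtain Q where Q: "\<forall>i\<in>S. fps_of_poly (P i) * psi^(2*K) = iota (Q i)" by blast
  define E where "E i = (if fst i then [:0,1:] else (1::F3 poly))" for i :: "bool \<times> nat list"
  have iE: "iota (E i) = e i" for i by (simp add: E_def e_def iota_w)
  define R where "R i = Q i * E i" for i
  have rel2: "(\<Sum>i\<in>S. iota (R i) * h (snd i)) = 0"
  proof -
    have "(\<Sum>i\<in>S. iota (R i) * h (snd i)) = (\<Sum>i\<in>S. psi^(2*K) * (fps_of_poly (P i) * (e i * h (snd i))))"
      by (rule sum.cong[OF refl]) (simp add: R_def iE Q[rule_format, symmetric] mult_ac)
    also have "\<dots> = psi^(2*K) * (\<Sum>i\<in>S. fps_of_poly (P i) * (e i * h (snd i)))"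
      by (simp add: sum_distrib_left)
    finally show ?thesis using rel1 by simp
  qed
  define c where "c as = (\<Sum>i\<in>{x\<in>S. snd x = as}. R i)" for as
  have rel3: "(\<Sum>as\<in>snd ` S. iota (c as) * h as) = 0"
  proof -
    have "(\<Sum>i\<in>S. iota (R i) * h (snd i)) = (\<Sum>as\<in>snd ` S. \<Sum>i\<in>{x\<in>S. snd x = as}. iota (R i) * h (snd i))"
      by (rule sum.image_gen[OF finS])
    also have "\<dots> = (\<Sum>as\<in>snd ` S. iota (c as) * h as)"
      by (rule sum.cong[OF refl]) (simp add: c_def sum_distrib_right)
    finally show ?thesis using rel2 by simp
  qed
  have c0: "\<forall>as\<in>snd ` S. c as = 0"
    by (rule core) (use finS SI adm_fam rel3 in auto)
  show "\<forall>i\<in>S. \<forall>n. 3 dvd coeff (p i) n"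
  proof (intro ballI allI)
    fix i n assume iS: "i \<in> S"
    define as where "as = snd i"
    define PF where "PF = (if (False, as) \<in> S then P (False, as) else 0)"
    define PT where "PT = (if (True, as) \<in> S then P (True, as) else 0)"
    have "iota (c as) = 0" using c0 iS as_def by simp
    moreover have "iota (c as) = psi^(2*K) * (fps_of_poly PF + psi * fps_of_poly PT)"
    proof -
      have fib: "{x\<in>S. snd x = as} = {(False, as), (True, as)} \<inter> S" by auto
      have "iota (c as) = (\<Sum>x\<in>{(False, as), (True, as)} \<inter> S. iota (R x))"
        by (simp add: c_def fib)
      also have "\<dots> = (\<Sum>x\<in>{(False, as), (True, as)}. if x \<in> S then iota (R x) else 0)"
        by (rule sum.inter_restrict) simp
      also have "\<dots> = (if (False, as) \<in> S then iota (R (False, as)) else 0)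
                    + (if (True, as) \<in> S then iota (R (True, as)) else 0)"
        by simp
      also have "\<dots> = psi^(2*K) * (fps_of_poly PF + psi * fps_of_poly PT)"
      proof -
        have 1: "(if (False, as) \<in> S then iota (R (False, as)) else 0) = psi^(2*K) * fps_of_poly PF"
        proof (cases "(False, as) \<in> S")
          case True
          then show ?thesis using Q by (simp add: R_def PF_def iE e_def mult.commute)
        qed (simp add: PF_def)
        have 2: "(if (True, as) \<in> S then iota (R (True, as)) else 0) = psi^(2*K) * (psi * fps_of_poly PT)"
        proof (cases "(True, as) \<in> S")
          case True
          then show ?thesis using Q by (simp add: R_def PT_def iE e_def mult_ac)
        qed (simp add: PT_def)
        show ?thesis unfolding 1 2 by (simp add: distrib_left)
      qed
      finally show ?thesis .
    qed
    ultimately have "fps_of_poly PF + psi * fps_of_poly PT = 0" using psi_nz by simp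
    then have "PF = 0" "PT = 0" using sep by blast+
    moreover have "i = (False, as) \<or> i = (True, as)" unfolding as_def by (cases i) auto
    ultimately have "P i = 0" using iS unfolding PF_def PT_def by auto
    then show "3 dvd coeff (p i) n" unfolding P_def by (rule map_poly_of_int_0)
  qed
qed


lemma lift:
  fixes F :: "'i \<Rightarrow> int fps"
  assumes m3: "lin_indep_mod 3 F I" and IH: "lin_indep_mod (3 ^ g) F I"
  shows "lin_indep_mod (3 ^ Suc g) F I"
  unfolding lin_indep_mod_def
proof (intro allI impI)
  fix S p assume finS: "finite S" and SI: "S \<subseteq> I"
    and dv: "\<forall>n. 3 ^ Suc g dvd (\<Sum>i\<in>S. fps_of_poly (p i) * F i) $ n"
  have dv3: "\<forall>n. 3 dvd (\<Sum>i\<in>S. fps_of_poly (p i) * F i) $ n"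
  proof
    fix n
    have "(3::int) dvd 3 ^ Suc g" by simp
    then show "3 dvd (\<Sum>i\<in>S. fps_of_poly (p i) * F i) $ n" using dv dvd_trans by blast
  qed
  have p3: "\<forall>i\<in>S. \<forall>n. 3 dvd coeff (p i) n"
    using m3 finS SI dv3 unfolding lin_indep_mod_def by blast
  define q where "q i = map_poly (\<lambda>x. x div 3) (p i)" for i
  have pq: "p i = smult 3 (q i)" if "i \<in> S" for i
  proof (rule poly_eqI)
    fix n
    have "3 dvd coeff (p i) n" using p3 that by blast
    then show "coeff (p i) n = coeff (smult 3 (q i)) n" by (simp add: q_def coeff_map_poly)
  qed
  have "(\<Sum>i\<in>S. fps_of_poly (p i) * F i) = fps_const 3 * (\<Sum>i\<in>S. fps_of_poly (q i) * F i)"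
  proof -
    have "(\<Sum>i\<in>S. fps_of_poly (p i) * F i) = (\<Sum>i\<in>S. fps_const 3 * (fps_of_poly (q i) * F i))"
      by (rule sum.cong[OF refl]) (simp add: pq fps_of_poly_smult mult.assoc)
    then show ?thesis by (simp add: sum_distrib_left)
  qed
  then have "\<forall>n. 3 ^ g dvd (\<Sum>i\<in>S. fps_of_poly (q i) * F i) $ n"
    using dv by (simp add: mult_dvd_mono)
  then have q3: "\<forall>i\<in>S. \<forall>n. 3 ^ g dvd coeff (q i) n"
    using IH finS SI unfolding lin_indep_mod_def by blast
  show "\<forall>i\<in>S. \<forall>n. 3 ^ Suc g dvd coeff (p i) n"
  proof (intro ballI allI)
    fix i n assume iS: "i \<in> S"
    have "3 ^ g dvd coeff (q i) n" using q3 iS by blast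
    then have "3 * 3 ^ g dvd 3 * coeff (q i) n" by (rule mult_dvd_mono[OF dvd_refl])
    then show "3 ^ Suc g dvd coeff (p i) n" using pq[OF iS] by simp
  qed
qed

lemma modpow: "0 < g \<Longrightarrow> lin_indep_mod (3 ^ g) fam fam_index"
proof (induction g)
  case 0 then show ?case by simp
next
  case (Suc g)
  show ?case
  proof (cases "g = 0")
    case True then show ?thesis using mod3 by simp
  next
    case False then show ?thesis using lift[OF mod3 Suc.IH] by simp
  qed
qed

lemma int_zero_of_pows: fixes x :: int assumes "\<forall>g::nat. 0 < g \<longrightarrow> 3 ^ g dvd x" shows "x = 0"
proof (rule ccontr)
  assume x: "x \<noteq> 0"
  define g where "g = Suc (nat \<bar>x\<bar>)"
  have "0 < g" unfolding g_def by simp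
  then have "3 ^ g dvd x" using assms by blast
  then have "\<bar>3 ^ g\<bar> \<le> \<bar>x\<bar>" by (rule dvd_imp_le_int[OF x])
  moreover have "int g < 3 ^ g" using lt3pow[of g] by (metis of_nat_less_iff of_nat_numeral of_nat_power)
  ultimately show False unfolding g_def by simp
qed

lemma intind: "lin_indep_int fam fam_index"
  unfolding lin_indep_int_def
proof (intro allI impI ballI)
  fix S p i assume finS: "finite S" and SI: "S \<subseteq> fam_index"
    and z: "(\<Sum>i\<in>S. fps_of_poly (p i) * fam i) = 0" and iS: "i \<in> S"
  show "p i = 0"
  proof (rule poly_eqI)
    fix n
    have "\<forall>g::nat. 0 < g \<longrightarrow> 3 ^ g dvd coeff (p i) n"
    proof (intro allI impI)
      fix g :: nat assume "0 < g"
      then have "lin_indep_mod (3 ^ g) fam fam_index" by (rule modpow)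
      then show "3 ^ g dvd coeff (p i) n"
        using finS SI z iS unfolding lin_indep_mod_def by simp
    qed
    then show "coeff (p i) n = coeff 0 n" using int_zero_of_pows by simp
  qed
qed

theorem theorem2p6:
  shows "lin_indep_mod 3 fam fam_index
    \<and> (\<forall>\<gamma>::nat. 0 < \<gamma> \<longrightarrow> lin_indep_mod (3 ^ \<gamma>) fam fam_index)
    \<and> lin_indep_int fam fam_index"
  using mod3 modpow intind by blast

end
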